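(* Let $W\in\mathbb{R}^{n\times n}$ be a symmetric positive definite matrix, $T\in\mathbb{R}^{n\times n}$ a symmetric positive semi-definite matrix, and suppose $A=W+iT\in\mathbb{C}^{n\times n}$ (with $i=\sqrt{-1}$) is non-singular. Let $b\in\mathbb{C}^n$, $\alpha>0$ and $0\le\omega<2$. Consider the GADI iteration: starting from an initial vector $x^{(0)}\in\mathbb{C}^n$, for $k=0,1,2,\dots$, $$(\alpha I+W)x^{(k+\frac12)} = (\alpha I - iT)x^{(k)} + b,$$ $$(\alpha I + iT)x^{(k+1)} = \big(iT - (1-\omega)\alpha I\big)x^{(k)} + (2-\omega)\alpha\, x^{(k+\frac12)}.$$ Then the sequence $\{x^{(k)}\}$ converges to the unique exact solution $x\in\mathbb{C}^n$ of $Ax=b$. *)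

theory Defs
  imports "HOL-Analysis.Analysis"
begin

definition sym_mat :: "real^'n^'n \<Rightarrow> bool" where
  "sym_mat M \<longleftrightarrow> transpose M = M"

definition pos_def_mat :: "real^'n^'n \<Rightarrow> bool" where
  "pos_def_mat M \<longleftrightarrow> sym_mat M \<and> (\<forall>x::real^'n. x \<noteq> 0 \<longrightarrow> x \<bullet> (M *v x) > 0)"

definition pos_semidef_mat :: "real^'n^'n \<Rightarrow> bool" where
  "pos_semidef_mat M \<longleftrightarrow> sym_mat M \<and> (\<forall>x::real^'n. x \<bullet> (M *v x) \<ge> 0)"

definition cmat :: "real^'n^'n \<Rightarrow> complex^'n^'n" where
  "cmat M = (\<chi> i j. complex_of_real (M $ i $ j))"

end

theory Submission
  imports Defs
begin

definition re :: "complex^'n \<Rightarrow> real^'n" where "re v = (\<chi> i. Re (v$i))"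
definition im :: "complex^'n \<Rightarrow> real^'n" where "im v = (\<chi> i. Im (v$i))"

lemma mat_mv: "mat c *v v = c *s v"
proof -
  have "\<And>i. (\<Sum>j\<in>UNIV. (if i = j then c else 0) * v $ j) = c * v $ i"
  proof -
    fix i
    have "(\<Sum>j\<in>UNIV. (if i = j then c else 0) * v $ j) = (\<Sum>j\<in>UNIV. if i = j then c * v $ j else 0)"
      by (rule sum.cong) auto
    then show "(\<Sum>j\<in>UNIV. (if i = j then c else 0) * v $ j) = c * v $ i" by simp
  qed
  then show ?thesis by (simp add: vec_eq_iff matrix_vector_mult_def mat_def)
qed

lemma ofreal_smult: "complex_of_real r *s (v::complex^'n) = r *\<^sub>R v"
  by (simp add: vec_eq_iff) (simp add: scaleR_conv_of_real)

lemma re_add[simp]: "re (v + w) = re v + re w" and im_add[simp]: "im (v + w) = im v + im w"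
  and re_diff[simp]: "re (v - w) = re v - re w" and im_diff[simp]: "im (v - w) = im v - im w"
  and re_scaleR[simp]: "re (r *\<^sub>R v) = r *\<^sub>R re v" and im_scaleR[simp]: "im (r *\<^sub>R v) = r *\<^sub>R im v"
  and re_i[simp]: "re (\<i> *s v) = - im v" and im_i[simp]: "im (\<i> *s v) = re v"
  by (simp_all add: re_def im_def vec_eq_iff)

lemma re_cmat[simp]: "re (cmat M *v v) = M *v re v" and im_cmat[simp]: "im (cmat M *v v) = M *v im v"
  by (simp_all add: re_def im_def vec_eq_iff matrix_vector_mult_def cmat_def Re_sum Im_sum)

lemma norm_re_im: "norm (v::complex^'n) ^ 2 = norm (re v) ^ 2 + norm (im v) ^ 2"
  by (simp add: power2_norm_eq_inner inner_vec_def inner_complex_def re_def im_def sum.distrib[symmetric])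

lemma sym_inner: assumes "sym_mat M" shows "x \<bullet> (M *v y) = (M *v x) \<bullet> y"
  using assms unfolding sym_mat_def
  by (metis dot_lmul_matrix transpose_matrix_vector)

lemma normT_sq:
  fixes T :: "real^'n^'n" assumes "sym_mat T"
  shows "norm (\<alpha> *\<^sub>R v - \<i> *s (cmat T *v v))^2 = \<alpha>^2 * (norm v)^2 + norm (T *v re v)^2 + norm (T *v im v)^2"
    and "norm (\<alpha> *\<^sub>R v + \<i> *s (cmat T *v v))^2 = \<alpha>^2 * (norm v)^2 + norm (T *v re v)^2 + norm (T *v im v)^2"
proof -
  have s1: "re v \<bullet> (T *v im v) = im v \<bullet> (T *v re v)" using sym_inner[OF assms] by (simp add: inner_commute)
  show "norm (\<alpha> *\<^sub>R v - \<i> *s (cmat T *v v))^2 = \<alpha>^2 * (norm v)^2 + norm (T *v re v)^2 + norm (T *v im v)^2"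
    unfolding norm_re_im[of "_ - _"] norm_re_im[of v]
    apply (simp only: re_diff im_diff re_scaleR im_scaleR re_i im_i re_cmat im_cmat)
    unfolding power2_norm_eq_inner
    using s1 by (simp add: inner_simps algebra_simps inner_commute power2_eq_square)
  show "norm (\<alpha> *\<^sub>R v + \<i> *s (cmat T *v v))^2 = \<alpha>^2 * (norm v)^2 + norm (T *v re v)^2 + norm (T *v im v)^2"
    unfolding norm_re_im[of "_ + _"] norm_re_im[of v]
    apply (simp only: re_add im_add re_scaleR im_scaleR re_i im_i re_cmat im_cmat)
    unfolding power2_norm_eq_inner
    using s1 by (simp add: inner_simps algebra_simps inner_commute power2_eq_square)
qed

lemma normT1:
  fixes T :: "real^'n^'n" assumes "sym_mat T"
  shows "norm (\<alpha> *\<^sub>R v - \<i> *s (cmat T *v v)) = norm (\<alpha> *\<^sub>R v + \<i> *s (cmat T *v v))"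
  using normT_sq[OF assms, of \<alpha> v] by (metis norm_ge_zero power2_eq_iff_nonneg)

lemma normT2:
  fixes T :: "real^'n^'n" assumes "sym_mat T" "\<alpha> \<ge> 0"
  shows "\<alpha> * norm v \<le> norm (\<alpha> *\<^sub>R v + \<i> *s (cmat T *v v))"
proof -
  have "(\<alpha> * norm v)^2 \<le> norm (\<alpha> *\<^sub>R v + \<i> *s (cmat T *v v))^2"
    using normT_sq(2)[OF assms(1), of \<alpha> v] by (simp add: power_mult_distrib)
  then show ?thesis using assms(2) by (meson norm_ge_zero power2_le_imp_le)
qed

lemma posdef_lower:
  fixes W :: "real^'n^'n" assumes "pos_def_mat W"
  shows "\<exists>\<mu>>0. \<forall>a. \<mu> * norm a ^ 2 \<le> a \<bullet> (W *v a)"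
proof -
  obtain i :: 'n where True by blast
  have ne: "sphere (0::real^'n) 1 \<noteq> {}" by (metis empty_iff mem_sphere_0 norm_axis_1)
  have cont: "continuous_on (sphere 0 1) (\<lambda>a::real^'n. a \<bullet> (W *v a))"
    by (intro continuous_intros linear_continuous_on matrix_vector_mul_bounded_linear)
  obtain x0 where x0: "x0 \<in> sphere 0 1" and mn: "\<forall>y\<in>sphere 0 1. x0 \<bullet> (W *v x0) \<le> y \<bullet> (W *v y)"
    using continuous_attains_inf[OF compact_sphere ne cont] by blast
  have pos: "x0 \<bullet> (W *v x0) > 0" proof -
    have "x0 \<noteq> 0" using x0 by auto
    then show ?thesis using assms unfolding pos_def_mat_def by blast
  qed
  have "a \<bullet> (W *v a) \<ge> x0 \<bullet> (W *v x0) * norm a ^ 2" for a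
  proof (cases "a = 0")
    case True then show ?thesis by simp
  next
    case False
    define u where "u = (1 / norm a) *\<^sub>R a"
    have u: "u \<in> sphere 0 1" using False by (simp add: u_def)
    have au: "a = norm a *\<^sub>R u" using False by (simp add: u_def)
    have "a \<bullet> (W *v a) = norm a ^ 2 * (u \<bullet> (W *v u))"
      by (subst au, subst au) (simp add: matrix_vector_mult_scaleR power2_eq_square)
    moreover have "x0 \<bullet> (W *v x0) \<le> u \<bullet> (W *v u)" using mn u by blast
    ultimately show ?thesis by (metis mult.commute mult_right_mono zero_le_power2)
  qed
  then show ?thesis using pos by (metis mult.commute)
qed

lemma normW:
  fixes W :: "real^'n^'n" assumes "pos_def_mat W" "\<alpha> > 0"
  shows "\<exists>\<rho>. 0 \<le> \<rho> \<and> \<rho> < 1 \<and> (\<forall>u. norm (\<alpha> *\<^sub>R u - cmat W *v u) \<le> \<rho> * norm (\<alpha> *\<^sub>R u + cmat W *v u))"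
proof -
  obtain \<mu> where mu: "\<mu> > 0" "\<And>a. \<mu> * norm a ^ 2 \<le> a \<bullet> (W *v a)" using posdef_lower[OF assms(1)] by blast
  obtain K where K: "K > 0" "\<And>a. norm (W *v a) \<le> norm a * K"
    using bounded_linear.pos_bounded[OF matrix_vector_mul_bounded_linear[of W]] by blast
  define c where "c = min (1/2) (4 * \<alpha> * \<mu> / (\<alpha> + K)^2)"
  have c: "0 < c" "c \<le> 1/2" "c * (\<alpha> + K)^2 \<le> 4 * \<alpha> * \<mu>"
    using assms(2) mu(1) K(1) by (auto simp: c_def min_def field_simps)
  have main: "norm (\<alpha> *\<^sub>R u - cmat W *v u)^2 \<le> (1 - c) * norm (\<alpha> *\<^sub>R u + cmat W *v u)^2" for u
  proof -
    define a where "a = re u" define b where "b = im u"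
    have m: "norm (\<alpha> *\<^sub>R u - cmat W *v u)^2 = norm (\<alpha> *\<^sub>R a - W *v a)^2 + norm (\<alpha> *\<^sub>R b - W *v b)^2"
      unfolding norm_re_im[of "_ - _"] by (simp add: a_def b_def)
    have p: "norm (\<alpha> *\<^sub>R u + cmat W *v u)^2 = norm (\<alpha> *\<^sub>R a + W *v a)^2 + norm (\<alpha> *\<^sub>R b + W *v b)^2"
      unfolding norm_re_im[of "_ + _"] by (simp add: a_def b_def)
    have nu: "norm u ^ 2 = norm a ^ 2 + norm b ^ 2" unfolding norm_re_im[of u] a_def b_def ..
    have d1: "norm (\<alpha> *\<^sub>R x + W *v x)^2 - norm (\<alpha> *\<^sub>R x - W *v x)^2 = 4 * \<alpha> * (x \<bullet> (W *v x))" for x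
      unfolding power2_norm_eq_inner by (simp add: inner_simps inner_commute algebra_simps)
    have ub: "norm (\<alpha> *\<^sub>R x + W *v x)^2 \<le> (\<alpha> + K)^2 * norm x ^ 2" for x
    proof -
      have "norm (\<alpha> *\<^sub>R x + W *v x) \<le> \<alpha> * norm x + norm x * K"
        using norm_triangle_ineq[of "\<alpha> *\<^sub>R x" "W *v x"] K(2)[of x] assms(2) by simp
      then have "norm (\<alpha> *\<^sub>R x + W *v x) \<le> (\<alpha> + K) * norm x" by (simp add: algebra_simps)
      then have "norm (\<alpha> *\<^sub>R x + W *v x)^2 \<le> ((\<alpha> + K) * norm x)^2"
        by (simp add: power_mono)
      then show ?thesis by (simp add: power_mult_distrib)
    qed
    have "c * norm (\<alpha> *\<^sub>R u + cmat W *v u)^2 \<le> c * ((\<alpha> + K)^2 * (norm a ^ 2 + norm b ^ 2))"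
      using add_mono[OF ub[of a] ub[of b]] c(1) p by (metis distrib_left mult_left_mono less_imp_le)
    also have "\<dots> \<le> 4 * \<alpha> * \<mu> * (norm a ^ 2 + norm b ^ 2)"
      using c(3) by (simp add: mult.assoc[symmetric] mult_right_mono)
    also have "\<dots> \<le> 4 * \<alpha> * (a \<bullet> (W *v a) + b \<bullet> (W *v b))"
    proof -
      have "\<mu> * (norm a ^ 2 + norm b ^ 2) \<le> a \<bullet> (W *v a) + b \<bullet> (W *v b)"
        using mu(2)[of a] mu(2)[of b] by (simp add: distrib_left)
      then show ?thesis using assms(2) by (simp add: mult.assoc)
    qed
    finally show ?thesis using m p d1[of a] d1[of b] by (simp add: algebra_simps)
  qed
  show ?thesis
  proof (intro exI conjI allI)
    show "0 \<le> sqrt (1 - c)" using c by simp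
    show "sqrt (1 - c) < 1" using c by simp
    fix u
    have "norm (\<alpha> *\<^sub>R u - cmat W *v u) = sqrt (norm (\<alpha> *\<^sub>R u - cmat W *v u)^2)" by simp
    also have "\<dots> \<le> sqrt ((1 - c) * norm (\<alpha> *\<^sub>R u + cmat W *v u)^2)" using main by (rule real_sqrt_le_mono)
    also have "\<dots> = sqrt (1 - c) * norm (\<alpha> *\<^sub>R u + cmat W *v u)" by (simp add: real_sqrt_mult)
    finally show "norm (\<alpha> *\<^sub>R u - cmat W *v u) \<le> sqrt (1 - c) * norm (\<alpha> *\<^sub>R u + cmat W *v u)" .
  qed
qed

lemma comp_scaleR: "(r::real) *\<^sub>R (z::complex) = of_real r * z"
  by (rule scaleR_conv_of_real)

lemma alg:
  fixes X' TX' X TX Y WY WS TS S B a w :: complex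
  assumes "a*X' + \<i>*TX' = \<i>*TX - (1-w)*a*X + (2-w)*a*Y" "WY = a*X - \<i>*TX + B - a*Y" "B = WS + \<i>*TS"
  shows "a*(X'-S) + \<i>*(TX' - TS) = (1-(2-w)/2)*(a*(X-S) + \<i>*(TX - TS)) + (2-w)/2 * (a*(Y-S) - (WY - WS))"
  using assms by algebra

theorem theorem2:
  fixes W T :: "real^'n^'n" and b :: "complex^'n"
    and \<alpha> \<omega> :: real
    and x y :: "nat \<Rightarrow> complex^'n"
  assumes "pos_def_mat W"
    and "pos_semidef_mat T"
    and "invertible (cmat W + mat \<i> ** cmat T)"
    and "\<alpha> > 0" and "0 \<le> \<omega>" and "\<omega> < 2"
    and half_step: "\<And>k. (mat (complex_of_real \<alpha>) + cmat W) *v y k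
                       = (mat (complex_of_real \<alpha>) - mat \<i> ** cmat T) *v x k + b"
    and full_step: "\<And>k. (mat (complex_of_real \<alpha>) + mat \<i> ** cmat T) *v x (Suc k)
                       = (mat \<i> ** cmat T - mat (complex_of_real ((1 - \<omega>) * \<alpha>))) *v x k
                         + complex_of_real ((2 - \<omega>) * \<alpha>) *s y k"
  shows "\<exists>s. (cmat W + mat \<i> ** cmat T) *v s = b
              \<and> (\<forall>s'. (cmat W + mat \<i> ** cmat T) *v s' = b \<longrightarrow> s' = s)
              \<and> x \<longlonglongrightarrow> s"
proof -
  let ?A = "cmat W + mat \<i> ** cmat T"
  obtain A' where A': "?A ** A' = mat 1" "A' ** ?A = mat 1" using assms(3) unfolding invertible_def by blast
  define s where "s = A' *v b"
  have As0: "?A *v s = b" unfolding s_def by (simp add: matrix_vector_mul_assoc A')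
  have uniq: "\<forall>s'. ?A *v s' = b \<longrightarrow> s' = s"
    unfolding s_def by (metis A'(2) matrix_vector_mul_assoc matrix_vector_mul_lid)
  have symT: "sym_mat T" using assms(2) unfolding pos_semidef_mat_def by blast
  have iT: "(mat \<i> ** M) *v v = \<i> *s (M *v v)" for M :: "complex^'n^'n" and v
    by (simp add: matrix_vector_mul_assoc[symmetric] mat_mv)
  have As: "cmat W *v s + \<i> *s (cmat T *v s) = b" using As0 by (simp add: matrix_vector_mult_add_rdistrib iT)
  have hs: "\<alpha> *\<^sub>R y k + cmat W *v y k = \<alpha> *\<^sub>R x k - \<i> *s (cmat T *v x k) + b" for k
    using half_step[of k] by (simp add: matrix_vector_mult_add_rdistrib matrix_vector_mult_diff_rdistrib iT mat_mv ofreal_smult)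
  have fs: "\<alpha> *\<^sub>R x (Suc k) + \<i> *s (cmat T *v x (Suc k)) = \<i> *s (cmat T *v x k) - ((1 - \<omega>) * \<alpha>) *\<^sub>R x k + ((2 - \<omega>) * \<alpha>) *\<^sub>R y k" for k
    using full_step[of k] by (simp add: matrix_vector_mult_add_rdistrib matrix_vector_mult_diff_rdistrib iT mat_mv ofreal_smult del: of_real_mult of_real_diff)
  define e where "e k = x k - s" for k
  define f where "f k = y k - s" for k
  define g where "g k = \<alpha> *\<^sub>R e k + \<i> *s (cmat T *v e k)" for k
  define \<theta> where "\<theta> = (2 - \<omega>) / 2"
  have th: "0 < \<theta>" "\<theta> \<le> 1" using assms(5,6) by (auto simp: \<theta>_def)
  have ef: "\<alpha> *\<^sub>R f k + cmat W *v f k = \<alpha> *\<^sub>R e k - \<i> *s (cmat T *v e k)" for k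
    using hs[of k] As unfolding e_def f_def
    by (simp add: vec_eq_iff matrix_vector_mult_diff_distrib algebra_simps)
  have gs: "g (Suc k) = (1 - \<theta>) *\<^sub>R g k + \<theta> *\<^sub>R (\<alpha> *\<^sub>R f k - cmat W *v f k)" for k
  proof -
    have "(g (Suc k)) $ i = ((1 - \<theta>) *\<^sub>R g k + \<theta> *\<^sub>R (\<alpha> *\<^sub>R f k - cmat W *v f k)) $ i" for i
    proof -
      have h1: "of_real \<alpha> * x (Suc k) $ i + \<i> * (cmat T *v x (Suc k)) $ i = \<i> * (cmat T *v x k) $ i
         - (1 - of_real \<omega>) * of_real \<alpha> * x k $ i + (2 - of_real \<omega>) * of_real \<alpha> * y k $ i"
        using arg_cong[of _ _ "\<lambda>v. v $ i", OF fs[of k]] by (simp add: comp_scaleR)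
      have h2: "(cmat W *v y k) $ i = of_real \<alpha> * x k $ i - \<i> * (cmat T *v x k) $ i + b $ i - of_real \<alpha> * y k $ i"
        using arg_cong[of _ _ "\<lambda>v. v $ i", OF hs[of k]] by (simp add: comp_scaleR algebra_simps)
      have h3: "b $ i = (cmat W *v s) $ i + \<i> * (cmat T *v s) $ i" using As by (simp add: vec_eq_iff)
      show ?thesis using alg[OF h1 h2 h3, of "s $ i"] unfolding g_def e_def f_def \<theta>_def
        by (simp add: matrix_vector_mult_diff_distrib comp_scaleR right_diff_distrib)
    qed
    then show ?thesis by (simp add: vec_eq_iff)
  qed
  obtain \<rho> where rho: "0 \<le> \<rho>" "\<rho> < 1"
    "\<And>u. norm (\<alpha> *\<^sub>R u - cmat W *v u) \<le> \<rho> * norm (\<alpha> *\<^sub>R u + cmat W *v u)"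
    using normW[OF assms(1,4)] by blast
  define c where "c = (1 - \<theta>) + \<theta> * \<rho>"
  have c: "0 \<le> c" "c < 1" using th rho(1,2) by (auto simp: c_def mult_left_le_one_le mult_strict_left_mono add_less_le_mono)
  have step: "norm (g (Suc k)) \<le> c * norm (g k)" for k
  proof -
    have n1: "norm (\<alpha> *\<^sub>R f k - cmat W *v f k) \<le> \<rho> * norm (g k)"
      using rho(3)[of "f k"] unfolding ef g_def normT1[OF symT] .
    have "norm (g (Suc k)) \<le> norm ((1 - \<theta>) *\<^sub>R g k) + norm (\<theta> *\<^sub>R (\<alpha> *\<^sub>R f k - cmat W *v f k))"
      unfolding gs by (rule norm_triangle_ineq)
    also have "\<dots> = (1 - \<theta>) * norm (g k) + \<theta> * norm (\<alpha> *\<^sub>R f k - cmat W *v f k)"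
      using th by simp
    also have "\<dots> \<le> (1 - \<theta>) * norm (g k) + \<theta> * (\<rho> * norm (g k))"
      using n1 th by (simp add: mult_left_mono)
    finally show ?thesis by (simp add: c_def algebra_simps)
  qed
  have bnd: "norm (g k) \<le> c ^ k * norm (g 0)" for k
  proof (induction k)
    case 0 then show ?case by simp
  next
    case (Suc k)
    have "norm (g (Suc k)) \<le> c * norm (g k)" by (rule step)
    also have "\<dots> \<le> c * (c ^ k * norm (g 0))" using Suc c(1) by (rule mult_left_mono)
    finally show ?case by simp
  qed
  have eb: "norm (x k - s) \<le> c ^ k * (norm (g 0) / \<alpha>)" for k
  proof -
    have "\<alpha> * norm (e k) \<le> norm (g k)" unfolding g_def using normT2[OF symT] assms(4) by simp
    then have "\<alpha> * norm (e k) \<le> c ^ k * norm (g 0)" using bnd[of k] by linarith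
    then show ?thesis using assms(4) unfolding e_def by (simp add: field_simps)
  qed
  have lim0: "(\<lambda>k. c ^ k * (norm (g 0) / \<alpha>)) \<longlonglongrightarrow> 0"
    using LIMSEQ_power_zero[of c] c by (intro tendsto_mult_left_zero) simp
  have "(\<lambda>k. x k - s) \<longlonglongrightarrow> 0"
    by (rule Lim_null_comparison[OF _ lim0]) (use eb in auto)
  then have "x \<longlonglongrightarrow> s" by (simp add: LIM_zero_iff)
  then show ?thesis using As0 uniq by blast
qed

end
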